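(* Let $G$ be a fixed connected simple undirected graph on $N\ge2$ nodes, $D=\max_i|N_i|$, and consider the system on $G$ with noise level $\eta\in(1-2/D,\,1]$. Then in the Markov chain of states $x(k)\in\{\pm1\}^N$, the states $+N$ (all $+1$) and $-N$ (all $-1$) are absorbing, and every other state is transient.
   Context: Nodes $V=\{1,\dots,N\}$ with values $x_i(k)\in\{+1,-1\}$. The neighborhood $N_i$ of node $i$ consists of $i$ and all nodes adjacent to $i$. With $v_i(k)=\frac{1}{|N_i|}\sum_{j\in N_i}x_j(k)$, the update is $x_i(k+1)=\operatorname{sign}[v_i(k)+\xi_i(k)]$, where $\xi_i(k)$ are i.i.d. uniform on $[-\eta,\eta]$ across $i$ and $k$, independent of $x(0)$. A state is absorbing if its one-step transition probability to itself is one; it is transient if, starting from it, it reappears with probability strictly less than one. *)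

theory Defs
  imports "HOL-Analysis.Analysis" "HOL-Library.FuncSet"
begin

text \<open>Nodes are 0,...,N-1 (a relabelling of 1,...,N). The graph is given by an
adjacency relation E on the node set.\<close>

definition simple_graph :: "nat \<Rightarrow> (nat \<Rightarrow> nat \<Rightarrow> bool) \<Rightarrow> bool" where
  "simple_graph N E \<longleftrightarrow> (\<forall>i<N. \<forall>j<N. E i j \<longleftrightarrow> E j i) \<and> (\<forall>i<N. \<not> E i i)"

definition connected_graph :: "nat \<Rightarrow> (nat \<Rightarrow> nat \<Rightarrow> bool) \<Rightarrow> bool" where
  "connected_graph N E \<longleftrightarrow>
     (\<forall>i<N. \<forall>j<N. (\<lambda>a b. a < N \<and> b < N \<and> E a b)\<^sup>*\<^sup>* i j)"

definition nbhd :: "nat \<Rightarrow> (nat \<Rightarrow> nat \<Rightarrow> bool) \<Rightarrow> nat \<Rightarrow> nat set" where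
  "nbhd N E i = {j. j < N \<and> (j = i \<or> E i j)}"

definition max_deg :: "nat \<Rightarrow> (nat \<Rightarrow> nat \<Rightarrow> bool) \<Rightarrow> nat" where
  "max_deg N E = Max ((\<lambda>i. card (nbhd N E i)) ` {..<N})"

definition states :: "nat \<Rightarrow> (nat \<Rightarrow> real) set" where
  "states N = {..<N} \<rightarrow>\<^sub>E {-1, 1}"

definition all_plus :: "nat \<Rightarrow> (nat \<Rightarrow> real)" where
  "all_plus N = (\<lambda>i. if i < N then 1 else undefined)"

definition all_minus :: "nat \<Rightarrow> (nat \<Rightarrow> real)" where
  "all_minus N = (\<lambda>i. if i < N then -1 else undefined)"

definition local_avg :: "nat \<Rightarrow> (nat \<Rightarrow> nat \<Rightarrow> bool) \<Rightarrow> (nat \<Rightarrow> real) \<Rightarrow> nat \<Rightarrow> real" where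
  "local_avg N E x i = (\<Sum>j\<in>nbhd N E i. x j) / real (card (nbhd N E i))"

definition noise :: "real \<Rightarrow> real measure" where
  "noise eta = uniform_measure lborel {-eta..eta}"

text \<open>One-step transition probability: the noises xi_i are independent, and
x_i(k+1) = sign(v_i(k) + xi_i(k)).\<close>
definition trans_prob ::
  "nat \<Rightarrow> (nat \<Rightarrow> nat \<Rightarrow> bool) \<Rightarrow> real \<Rightarrow> (nat \<Rightarrow> real) \<Rightarrow> (nat \<Rightarrow> real) \<Rightarrow> real" where
  "trans_prob N E eta x y =
     (\<Prod>i<N. measure (noise eta) {\<xi>. sgn (local_avg N E x i + \<xi>) = y i})"

text \<open>First-passage probabilities: first_passage n y x = probability that the chain
started at y visits x for the first time (at times \<ge> 1) at time n.\<close>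
fun first_passage ::
  "nat \<Rightarrow> (nat \<Rightarrow> nat \<Rightarrow> bool) \<Rightarrow> real \<Rightarrow> nat \<Rightarrow> (nat \<Rightarrow> real) \<Rightarrow> (nat \<Rightarrow> real) \<Rightarrow> real" where
  "first_passage N E eta 0 y x = 0"
| "first_passage N E eta (Suc 0) y x = trans_prob N E eta y x"
| "first_passage N E eta (Suc (Suc n)) y x =
     (\<Sum>z\<in>states N - {x}. trans_prob N E eta y z * first_passage N E eta (Suc n) z x)"

definition return_prob ::
  "nat \<Rightarrow> (nat \<Rightarrow> nat \<Rightarrow> bool) \<Rightarrow> real \<Rightarrow> (nat \<Rightarrow> real) \<Rightarrow> real" where
  "return_prob N E eta x = (\<Sum>n. first_passage N E eta (Suc n) x x)"

definition absorbing ::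
  "nat \<Rightarrow> (nat \<Rightarrow> nat \<Rightarrow> bool) \<Rightarrow> real \<Rightarrow> (nat \<Rightarrow> real) \<Rightarrow> bool" where
  "absorbing N E eta x \<longleftrightarrow> trans_prob N E eta x x = 1"

definition transient ::
  "nat \<Rightarrow> (nat \<Rightarrow> nat \<Rightarrow> bool) \<Rightarrow> real \<Rightarrow> (nat \<Rightarrow> real) \<Rightarrow> bool" where
  "transient N E eta x \<longleftrightarrow> return_prob N E eta x < 1"

end

theory Submission
  imports Defs "HOL-Probability.Probability"
begin


lemma noise_meas:
  assumes "eta > 0" and B: "B \<in> sets borel"
  shows "measure (noise eta) B = measure lborel ({-eta..eta} \<inter> B) / (2*eta)"
  using assms unfolding noise_def
  by (subst measure_uniform_measure) (auto simp: emeasure_lborel_Icc_eq)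

lemma noise_prob: "eta > 0 \<Longrightarrow> prob_space (noise eta)"
  unfolding noise_def by (rule prob_space_uniform_measure) (auto simp: emeasure_lborel_Icc_eq)

lemma sgn_pos_set: "{\<xi>::real. sgn (v + \<xi>) = 1} = {-v<..}"
  by (auto simp: sgn_real_def split: if_splits)
lemma sgn_neg_set: "{\<xi>::real. sgn (v + \<xi>) = -1} = {..< -v}"
  by (auto simp: sgn_real_def split: if_splits)

lemma noise_sum:
  assumes "eta > 0"
  shows "measure (noise eta) {\<xi>. sgn (v + \<xi>) = 1} + measure (noise eta) {\<xi>. sgn (v + \<xi>) = -1} = 1"
proof -
  interpret prob_space "noise eta" using noise_prob[OF assms] .
  have sp: "space (noise eta) = UNIV" by (simp add: noise_def)
  have ev: "sets (noise eta) = sets borel" by (simp add: noise_def)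
  have pt: "measure (noise eta) {-v} = 0"
    using assms by (cases "-v \<in> {-eta..eta}") (auto simp add: noise_meas Int_insert_right)
  have "measure (noise eta) {-v<..} = 1 - measure (noise eta) {..-v}"
  proof -
    have "UNIV - {..-v} = {-v<..}" by auto
    then show ?thesis using prob_compl[of "{..-v}"] by (simp add: sp ev)
  qed
  moreover have "measure (noise eta) {..-v} = measure (noise eta) {..< -v} + measure (noise eta) {-v}"
  proof -
    have "{..-v} = {..< -v} \<union> {-v}" by auto
    moreover have "prob ({..< -v} \<union> {-v}) = prob {..< -v} + prob {-v}"
      by (rule finite_measure_Union) (auto simp: ev)
    ultimately show ?thesis by simp
  qed
  ultimately show ?thesis using pt by (simp add: sgn_pos_set sgn_neg_set)
qed

lemma noise_pos:
  assumes "eta > 0" "v > -eta"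
  shows "measure (noise eta) {\<xi>. sgn (v + \<xi>) = 1} > 0"
proof -
  define c where "c = max (-v) (-eta)"
  have "measure lborel {c<..eta} \<le> measure lborel ({-eta..eta} \<inter> {-v<..})"
    by (rule measure_mono_fmeasurable) (auto simp: c_def intro!: fmeasurable_Int_fmeasurable[OF fmeasurable_compact])
  moreover have "measure lborel {c<..eta} = eta - c" using assms by (simp add: c_def)
  moreover have "eta - c > 0" using assms by (simp add: c_def)
  ultimately show ?thesis using assms by (simp add: noise_meas sgn_pos_set)
qed

lemma noise_neg:
  assumes "eta > 0" "v < eta"
  shows "measure (noise eta) {\<xi>. sgn (v + \<xi>) = -1} > 0"
proof -
  define c where "c = min (-v) eta"
  have "measure lborel {-eta..<c} \<le> measure lborel ({-eta..eta} \<inter> {..< -v})"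
    by (rule measure_mono_fmeasurable) (auto simp: c_def intro!: fmeasurable_Int_fmeasurable[OF fmeasurable_compact])
  moreover have "measure lborel {-eta..<c} = c + eta" using assms by (simp add: c_def)
  moreover have "c + eta > 0" using assms by (simp add: c_def)
  ultimately show ?thesis using assms by (simp add: noise_meas sgn_neg_set)
qed

lemma noise_zero_neg:
  assumes "eta > 0" "v \<ge> eta"
  shows "measure (noise eta) {\<xi>. sgn (v + \<xi>) = -1} = 0"
proof -
  have "{-eta..eta} \<inter> {..< -v} = {}" using assms by auto
  then show ?thesis using assms by (simp add: noise_meas sgn_neg_set)
qed

lemma noise_zero_pos:
  assumes "eta > 0" "v \<le> -eta"
  shows "measure (noise eta) {\<xi>. sgn (v + \<xi>) = 1} = 0"
proof -
  have "{-eta..eta} \<inter> {-v<..} = {}" using assms by auto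
  then show ?thesis using assms by (simp add: noise_meas sgn_pos_set)
qed

lemma trans_nonneg: "0 \<le> trans_prob N E eta y z"
  unfolding trans_prob_def by (intro prod_nonneg) auto

lemma trans_le1:
  assumes "eta > 0" shows "trans_prob N E eta y z \<le> 1"
proof -
  interpret prob_space "noise eta" using noise_prob[OF assms] .
  show ?thesis unfolding trans_prob_def by (intro prod_le_1) auto
qed

lemma trans_sum:
  assumes "eta > 0"
  shows "(\<Sum>z\<in>states N. trans_prob N E eta y z) = 1"
proof -
  have "(\<Sum>z\<in>states N. trans_prob N E eta y z) =
     (\<Prod>i<N. \<Sum>c\<in>{-1,1}. measure (noise eta) {\<xi>. sgn (local_avg N E y i + \<xi>) = c})"
    unfolding states_def trans_prob_def
    by (subst prod_sum_PiE) auto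
  also have "\<dots> = (\<Prod>i<N. (1::real))"
  proof (rule prod.cong)
    fix i
    show "(\<Sum>c\<in>{-1,1}. measure (noise eta) {\<xi>. sgn (local_avg N E y i + \<xi>) = c}) = 1"
      using noise_sum[OF assms, of "local_avg N E y i"] by simp
  qed simp
  finally show ?thesis by simp
qed

lemma fp_nonneg: "0 \<le> first_passage N E eta n y x"
  by (induction N E eta n y x rule: first_passage.induct)
     (auto simp: trans_nonneg intro!: sum_nonneg mult_nonneg_nonneg)

lemma partial_bound:
  assumes eta: "eta > 0" and x: "x \<in> states N"
    and q1: "\<And>y. q y \<le> 1"
    and qh: "\<And>y. q y \<le> (\<Sum>z\<in>states N - {x}. trans_prob N E eta y z * q z)"
  shows "(\<Sum>k<n. first_passage N E eta (Suc k) y x) \<le> 1 - q y"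
proof (induction n arbitrary: y)
  case 0 then show ?case using q1[of y] by simp
next
  case (Suc n)
  let ?P = "trans_prob N E eta"
  let ?F = "\<lambda>z. (\<Sum>k<n. first_passage N E eta (Suc k) z x)"
  have fin: "finite (states N)" unfolding states_def by (auto intro: finite_PiE)
  have "(\<Sum>k<Suc n. first_passage N E eta (Suc k) y x) =
      ?P y x + (\<Sum>k<n. first_passage N E eta (Suc (Suc k)) y x)"
    by (subst sum.lessThan_Suc_shift) simp
  also have "(\<Sum>k<n. first_passage N E eta (Suc (Suc k)) y x) =
      (\<Sum>z\<in>states N - {x}. ?P y z * ?F z)"
    by (simp add: sum_distrib_left sum.swap[of _ "{..<n}"])
  also have "\<dots> \<le> (\<Sum>z\<in>states N - {x}. ?P y z * (1 - q z))"
    by (intro sum_mono mult_left_mono Suc.IH trans_nonneg)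
  also have "\<dots> = (\<Sum>z\<in>states N - {x}. ?P y z) - (\<Sum>z\<in>states N - {x}. ?P y z * q z)"
    by (simp add: algebra_simps sum_subtractf)
  also have "(\<Sum>z\<in>states N - {x}. ?P y z) = 1 - ?P y x"
    using sum.remove[OF fin x, of "?P y"] trans_sum[OF eta, of N E y] by simp
  finally show ?case using qh[of y] by simp
qed

lemma return_bound:
  assumes eta: "eta > 0" and x: "x \<in> states N"
    and q1: "\<And>y. q y \<le> 1"
    and qh: "\<And>y. q y \<le> (\<Sum>z\<in>states N - {x}. trans_prob N E eta y z * q z)"
  shows "return_prob N E eta x \<le> 1 - q x"
proof -
  have s: "summable (\<lambda>n. first_passage N E eta (Suc n) x x)"
    by (rule summableI_nonneg_bounded[where x="1 - q x"])
       (auto simp: fp_nonneg intro: partial_bound[OF assms])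
  show ?thesis unfolding return_prob_def
    by (rule suminf_le_const[OF s]) (rule partial_bound[OF assms])
qed

lemma path_edge:
  assumes "R\<^sup>*\<^sup>* a b" "y a = 1" "y b \<noteq> 1"
  shows "\<exists>u v. R u v \<and> y u = 1 \<and> y v \<noteq> 1"
  using assms by (induction rule: rtranclp_induct) auto



theorem lemma1:
  fixes N :: nat and E :: "nat \<Rightarrow> nat \<Rightarrow> bool" and eta :: real
  assumes "N \<ge> 2"
    and "simple_graph N E"
    and "connected_graph N E"
    and "1 - 2 / real (max_deg N E) < eta" and "eta \<le> 1"
  shows "absorbing N E eta (all_plus N) \<and> absorbing N E eta (all_minus N) \<and>
         (\<forall>x \<in> states N - {all_plus N, all_minus N}. transient N E eta x)"
proof -
  note N2 = assms(1) and sg = assms(2) and cg = assms(3) and etaD = assms(4) and eta1 = assms(5)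
  define D where "D = max_deg N E"
  define R where "R = (\<lambda>a b. a < N \<and> b < N \<and> E a b)"
  have symE: "\<And>a b. a < N \<Longrightarrow> b < N \<Longrightarrow> E a b \<Longrightarrow> E b a" using sg unfolding simple_graph_def by blast
  have irr: "\<And>a. a < N \<Longrightarrow> \<not> E a a" using sg unfolding simple_graph_def by blast
  have conn: "\<And>i j. i < N \<Longrightarrow> j < N \<Longrightarrow> R\<^sup>*\<^sup>* i j" using cg unfolding connected_graph_def R_def by blast
  have finN: "\<And>i. finite (nbhd N E i)" unfolding nbhd_def by auto
  have inN: "\<And>i. i < N \<Longrightarrow> i \<in> nbhd N E i" unfolding nbhd_def by auto
  have subN: "\<And>i. nbhd N E i \<subseteq> {..<N}" unfolding nbhd_def by auto
  have cardD: "\<And>i. i < N \<Longrightarrow> card (nbhd N E i) \<le> D"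
    unfolding D_def max_deg_def by (rule Max_ge) auto
  have card1: "card (nbhd N E i) \<ge> 1" if "i < N" for i
  proof -
    have "nbhd N E i \<noteq> {}" using inN[OF that] by blast
    then show ?thesis using finN[of i] by (simp add: Suc_le_eq card_gt_0_iff)
  qed
  have D2: "D \<ge> 2"
  proof -
    have "R\<^sup>*\<^sup>* 0 1" using conn[of 0 1] N2 by simp
    then obtain b where "R 0 b" by (metis converse_rtranclpE zero_neq_one)
    have b01: "b < N" "E 0 b" using \<open>R 0 b\<close> by (auto simp: R_def)
    have b2: "b \<noteq> 0"
    proof
      assume "b = 0"
      then have "E 0 0" using b01 by simp
      moreover have "\<not> E 0 0" using irr[of 0] N2 by simp
      ultimately show False by blast
    qed
    note b = b01 b2
    have "{0, b} \<subseteq> nbhd N E 0" using b N2 unfolding nbhd_def by auto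
    then have "card {0,b} \<le> card (nbhd N E 0)" using finN by (intro card_mono) auto
    then show ?thesis using b cardD[of 0] N2 by auto
  qed
  have eta0: "eta > 0"
  proof -
    have "2 / real D \<le> 1" using D2 by simp
    then show ?thesis using etaD unfolding D_def by linarith
  qed
  have avg_const: "\<And>i c. i < N \<Longrightarrow> (\<forall>j<N. y j = c) \<Longrightarrow> local_avg N E y i = c" for y
  proof -
    fix i c assume i: "i < N" and yc: "\<forall>j<N. y j = c"
    have "(\<Sum>j\<in>nbhd N E i. y j) = (\<Sum>j\<in>nbhd N E i. c)"
      using subN yc by (intro sum.cong) auto
    then show "local_avg N E y i = c" using card1[OF i] unfolding local_avg_def by simp
  qed
  have absP: "absorbing N E eta (all_plus N)"
    unfolding absorbing_def trans_prob_def
  proof (rule prod.neutral, rule ballI)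
    fix i assume "i \<in> {..<N}"
    then have i: "i < N" by simp
    have av: "local_avg N E (all_plus N) i = 1" using avg_const[OF i] by (simp add: all_plus_def)
    show "measure (noise eta) {\<xi>. sgn (local_avg N E (all_plus N) i + \<xi>) = all_plus N i} = 1"
      using noise_sum[OF eta0, of 1] noise_zero_neg[OF eta0, of 1] eta1 av i
      by (simp add: all_plus_def)
  qed
  have absM: "absorbing N E eta (all_minus N)"
    unfolding absorbing_def trans_prob_def
  proof (rule prod.neutral, rule ballI)
    fix i assume "i \<in> {..<N}"
    then have i: "i < N" by simp
    have av: "local_avg N E (all_minus N) i = -1" using avg_const[OF i] by (simp add: all_minus_def)
    show "measure (noise eta) {\<xi>. sgn (local_avg N E (all_minus N) i + \<xi>) = all_minus N i} = 1"
      using noise_sum[OF eta0, of "-1"] noise_zero_pos[OF eta0, of "-1"] eta1 av i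
      by (simp add: all_minus_def)
  qed
  have trans: "transient N E eta x" if x: "x \<in> states N - {all_plus N, all_minus N}" for x
  proof -
    let ?S = "states N"
    let ?P = "trans_prob N E eta"
    define pl where "pl y = {i. i < N \<and> y i = 1}" for y :: "nat \<Rightarrow> real"
    define ex :: "(nat \<Rightarrow> real) \<Rightarrow> nat \<Rightarrow> real" where "ex y = (\<lambda>i. if i < N then (if \<exists>j\<in>nbhd N E i. y j = 1 then 1 else -1) else undefined)"
      for y :: "nat \<Rightarrow> real"
    have finS: "finite ?S" unfolding states_def by (auto intro: finite_PiE)
    have Sval: "\<And>y j. y \<in> ?S \<Longrightarrow> j < N \<Longrightarrow> y j = 1 \<or> y j = -1"
      unfolding states_def by auto
    have Sout: "\<And>y j. y \<in> ?S \<Longrightarrow> \<not> j < N \<Longrightarrow> y j = undefined"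
      unfolding states_def by auto
    have plN: "\<And>y. pl y \<subseteq> {..<N}" unfolding pl_def by auto
    have exS: "\<And>y. ex y \<in> ?S" unfolding states_def ex_def by (auto simp: PiE_iff extensional_def)
    have plsub: "\<And>y. pl y \<subseteq> pl (ex y)" unfolding pl_def ex_def using inN by auto
    have plfull: "\<And>y. y \<in> ?S \<Longrightarrow> pl y = {..<N} \<Longrightarrow> y = all_plus N"
    proof
      fix y j assume y: "y \<in> ?S" "pl y = {..<N}"
      show "y j = all_plus N j"
      proof (cases "j < N")
        case True then show ?thesis using y unfolding pl_def all_plus_def by auto
      next
        case False then show ?thesis using Sout[OF y(1) False] unfolding all_plus_def by simp
      qed
    qed
    have plAP: "pl (all_plus N) = {..<N}" unfolding pl_def all_plus_def by auto
    have APS: "all_plus N \<in> ?S" unfolding states_def all_plus_def by (auto simp: PiE_iff extensional_def)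
    have grow: "pl y \<subset> pl (ex y)" if y: "y \<in> ?S" "pl y \<noteq> {}" "y \<noteq> all_plus N" for y
    proof -
      obtain i where i: "i < N" "y i = 1" using y(2) unfolding pl_def by auto
      have "\<not> (\<forall>j<N. y j = 1)"
      proof
        assume h: "\<forall>j<N. y j = 1"
        then have "pl y = {..<N}" unfolding pl_def by auto
        then show False using plfull[OF y(1)] y(3) by simp
      qed
      then obtain j where j: "j < N" "y j \<noteq> 1" by auto
      obtain u v where uv: "R u v" "y u = 1" "y v \<noteq> 1"
        using path_edge[OF conn[OF i(1) j(1)], of y] i j by blast
      have "v \<notin> pl y" using uv unfolding pl_def by auto
      moreover have "v \<in> pl (ex y)"
      proof -
        have "u \<in> nbhd N E v" using uv symE unfolding R_def nbhd_def by auto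
        then show ?thesis using uv unfolding pl_def ex_def R_def by auto
      qed
      ultimately show ?thesis using plsub[of y] by blast
    qed
    have Ppos: "?P y (ex y) > 0" if y: "y \<in> ?S" "pl y \<noteq> {}" for y
      unfolding trans_prob_def
    proof (rule prod_pos)
      fix i assume "i \<in> {..<N}"
      then have i: "i < N" by simp
      show "measure (noise eta) {\<xi>. sgn (local_avg N E y i + \<xi>) = ex y i} > 0"
      proof (cases "\<exists>j\<in>nbhd N E i. y j = 1")
        case True
        then obtain j0 where j0: "j0 \<in> nbhd N E i" "y j0 = 1" by blast
        define n where "n = card (nbhd N E i)"
        have n1: "n \<ge> 1" and nD: "n \<le> D" using card1[OF i] cardD[OF i] unfolding n_def by auto
        have ge: "y j \<ge> -1" if "j \<in> nbhd N E i" for j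
          using Sval[OF y(1), of j] that subN by force
        have "(\<Sum>j\<in>nbhd N E i - {j0}. y j) \<ge> (\<Sum>j\<in>nbhd N E i - {j0}. -1)"
          using ge by (intro sum_mono) auto
        also have "(\<Sum>j\<in>nbhd N E i - {j0}. (-1::real)) = - (real n - 1)"
          using j0 finN[of i] n1 unfolding n_def by (simp add: of_nat_diff)
        finally have s1: "(\<Sum>j\<in>nbhd N E i - {j0}. y j) \<ge> - (real n - 1)" .
        have "(\<Sum>j\<in>nbhd N E i. y j) = y j0 + (\<Sum>j\<in>nbhd N E i - {j0}. y j)"
          using sum.remove[OF finN j0(1)] by simp
        then have s: "(\<Sum>j\<in>nbhd N E i. y j) \<ge> 2 - real n" using s1 j0 by simp
        have a1: "local_avg N E y i \<ge> (2 - real n) / real n"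
          unfolding local_avg_def n_def[symmetric] using s n1 by (intro divide_right_mono) auto
        have a2: "(2 - real n) / real n = 2 / real n - 1" using n1 by (simp add: field_simps)
        have a3: "2 / real n \<ge> 2 / real D" using n1 nD by (intro divide_left_mono) auto
        from a1 a2 a3 have "local_avg N E y i > - eta" using etaD unfolding D_def by linarith
        then show ?thesis using noise_pos[OF eta0] True i unfolding ex_def by simp
      next
        case False
        have "\<forall>j<N. (\<lambda>j. if j \<in> nbhd N E i then y j else -1) j = -1"
        proof (intro allI impI)
          fix j assume jN: "j < N"
          show "(\<lambda>j. if j \<in> nbhd N E i then y j else -1) j = -1"
          proof (cases "j \<in> nbhd N E i")
            case True
            then have "y j \<noteq> 1" using False by blast
            then show ?thesis using Sval[OF y(1) jN] True by simp
          qed simp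
        qed
        then have "local_avg N E (\<lambda>j. if j \<in> nbhd N E i then y j else -1) i = -1"
          by (rule avg_const[OF i])
        moreover have "local_avg N E (\<lambda>j. if j \<in> nbhd N E i then y j else -1) i = local_avg N E y i"
        proof -
          have "(\<Sum>j\<in>nbhd N E i. (\<lambda>j. if j \<in> nbhd N E i then y j else -1) j) = (\<Sum>j\<in>nbhd N E i. y j)"
            by (rule sum.cong) auto
          then show ?thesis unfolding local_avg_def by simp
        qed
        ultimately have "local_avg N E y i = -1" by simp
        then show ?thesis using noise_neg[OF eta0, of "-1"] eta0 False i unfolding ex_def by simp
      qed
    qed
    have xS: "x \<in> ?S" and xP: "x \<noteq> all_plus N" and xM: "x \<noteq> all_minus N" using x by auto
    have plx: "pl x \<noteq> {}"
    proof
      assume "pl x = {}"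
      have "x = all_minus N"
      proof
        fix j show "x j = all_minus N j"
          using \<open>pl x = {}\<close> Sval[OF xS, of j] Sout[OF xS, of j] unfolding pl_def all_minus_def
          by (cases "j < N") auto
      qed
      then show False using xM by simp
    qed
    define T where "T = {y \<in> ?S. pl y \<noteq> {}}"
    have finT: "finite T" using finS unfolding T_def by simp
    have xT: "x \<in> T" using xS plx unfolding T_def by simp
    define p where "p = Min ((\<lambda>y. ?P y (ex y)) ` T)"
    have pT: "p \<le> ?P y (ex y)" if "y \<in> T" for y
      unfolding p_def using finT that by (intro Min_le) auto
    have p0: "p > 0" unfolding p_def using finT xT Ppos unfolding T_def by (subst Min_gr_iff) auto
    have p1: "p \<le> 1" using pT[OF xT] trans_le1[OF eta0, of N E x "ex x"] by linarith
    define q where "q y = (if y \<in> ?S \<and> pl x \<subseteq> pl y then p ^ (N - card (pl y)) else 0)" for y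
    have p0': "p \<ge> 0" using p0 by simp
    have q0: "q y \<ge> 0" for y unfolding q_def using p0' by simp
    have q1: "q y \<le> 1" for y unfolding q_def using p0 p1 by (simp add: power_le_one)
    have qx: "q x > 0" unfolding q_def using xS p0 by simp
    have qh: "q y \<le> (\<Sum>z\<in>?S - {x}. ?P y z * q z)" for y
    proof -
      have nn: "\<And>z. z \<in> ?S - {x} \<Longrightarrow> 0 \<le> ?P y z * q z" using q0 trans_nonneg by (simp add: mult_nonneg_nonneg)
      have fin: "finite (?S - {x})" using finS by simp
      show ?thesis
      proof (cases "y \<in> ?S \<and> pl x \<subseteq> pl y")
        case False
        then have "q y = 0" unfolding q_def by (rule if_not_P)
        moreover have "0 \<le> (\<Sum>z\<in>?S - {x}. ?P y z * q z)" by (rule sum_nonneg) (rule nn)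
        ultimately show ?thesis by simp
      next
        case True
        show ?thesis
        proof (cases "y = all_plus N")
          case yP: True
          have "q y = 1" using True yP plAP unfolding q_def by simp
          moreover have "?P y y = 1" using absP yP unfolding absorbing_def by simp
          moreover have "y \<in> ?S - {x}" using yP xP APS by simp
          moreover have "?P y y * q y \<le> (\<Sum>z\<in>?S - {x}. ?P y z * q z)"
            using member_le_sum[where f="\<lambda>z. ?P y z * q z" and i=y and A="?S - {x}"] nn fin \<open>y \<in> ?S - {x}\<close> by blast
          ultimately show ?thesis by simp
        next
          case yP: False
          let ?z = "ex y"
          have yT: "y \<in> T" using True plx unfolding T_def by blast
          have g: "pl y \<subset> pl ?z" using grow[of y] True yP plx by blast
          have zx: "?z \<noteq> x" using g True by blast
          have zS: "?z \<in> ?S - {x}" using exS zx by simp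
          have cz: "card (pl y) < card (pl ?z)" using g plN by (meson finite_lessThan finite_subset psubset_card_mono)
          have czN: "card (pl ?z) \<le> N" using plN card_mono[of "{..<N}" "pl ?z"] by simp
          have qz: "q ?z = p ^ (N - card (pl ?z))" unfolding q_def using exS True g by auto
          have qy: "q y = p * p ^ (N - card (pl y) - 1)"
          proof -
            have "N - card (pl y) = Suc (N - card (pl y) - 1)" using cz czN by linarith
            then show ?thesis unfolding q_def using True by (metis power_Suc)
          qed
          have "p ^ (N - card (pl y) - 1) \<le> p ^ (N - card (pl ?z))"
            using p0 p1 cz czN by (intro power_decreasing) auto
          then have "q y \<le> ?P y ?z * q ?z"
            unfolding qy qz using pT[OF yT] p0 by (intro mult_mono) auto
          also have "\<dots> \<le> (\<Sum>z\<in>?S - {x}. ?P y z * q z)"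
            using member_le_sum[where f="\<lambda>z. ?P y z * q z" and i="?z" and A="?S - {x}"] nn fin zS by blast
          finally show ?thesis .
        qed
      qed
    qed
    have "return_prob N E eta x \<le> 1 - q x"
      by (rule return_bound[OF eta0 xS q1 qh])
    then show ?thesis unfolding transient_def using qx by simp
  qed
  show ?thesis using absP absM trans by blast
qed
end
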